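(* Let $d\geq1$, $T\geq2$, and let $x^0,x^1\in(\mathbb{R}^d)^T$ satisfy $x^0_{t,j}\neq x^1_{t,j}$ for all $1\le t\le T$, $1\le j\le d$. Let $D:=\prod_{t=1}^T\prod_{j=1}^d\{x^0_{t,j},x^1_{t,j}\}\subseteq(\mathbb{R}^d)^T$. Let $V,V^{(n)}:D\to\mathbb{R}$, $n\in\mathbb{N}$, and real-valued functions $\hat h_{t,j},\hat g_j$ and $\hat h^{(n)}_{t,j},\hat g^{(n)}_j$ be such that for all $x=(x_{t,j})\in D$, $V(x)=\sum_{t=1}^{T-1}\sum_{j=1}^d\hat h_{t,j}(x_1,\dots,x_t)(x_{t+1,j}-x_{t,j})+\sum_{j=1}^d\hat g_j(x_{T,j})$, and similarly for $V^{(n)}$ with $\hat h^{(n)}_{t,j},\hat g^{(n)}_j$, and such that $\hat g_j(x^0_{T,j})=\hat g^{(n)}_j(x^0_{T,j})=0$ for $j=2,\dots,d$ and all $n$. Then the values $\hat h_{t,j}(x_1,\dots,x_t)$ and $\hat g_j(x_{T,j})$ for $x\in D$ are uniquely determined by $V$. Moreover, if $V^{(n)}\to V$ pointwise on $D$, then $\hat h^{(n)}_{t,j}(x_1,\dots,x_t)\to\hat h_{t,j}(x_1,\dots,x_t)$ and $\hat g^{(n)}_j(x_{T,j})\to\hat g_j(x_{T,j})$ for all $x\in D$ and all $t,j$.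
   Context: Here $x_t=(x_{t,1},\dots,x_{t,d})\in\mathbb{R}^d$ denotes the $t$-th block of $x\in(\mathbb{R}^d)^T$. *)

theory Defs
  imports "HOL-Analysis.Analysis"
begin

text \<open>A point x of (R^d)^T is represented as a function x :: nat => nat => real,
  where x t j is the coordinate x_{t,j} for 1 <= t <= T, 1 <= j <= d; outside
  this index range the value is fixed to 0 (extensional representation).\<close>

type_synonym point = "nat \<Rightarrow> nat \<Rightarrow> real"

definition grid :: "nat \<Rightarrow> nat \<Rightarrow> point \<Rightarrow> point \<Rightarrow> point set" where
  "grid T d x0 x1 = {x. (\<forall>t j. (1 \<le> t \<and> t \<le> T \<and> 1 \<le> j \<and> j \<le> d \<longrightarrow> x t j \<in> {x0 t j, x1 t j})
                          \<and> (\<not>(1 \<le> t \<and> t \<le> T \<and> 1 \<le> j \<and> j \<le> d) \<longrightarrow> x t j = 0))}"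

definition prefix :: "nat \<Rightarrow> nat \<Rightarrow> point \<Rightarrow> point" where
  "prefix d t x = (\<lambda>s j. if 1 \<le> s \<and> s \<le> t \<and> 1 \<le> j \<and> j \<le> d then x s j else 0)"

definition repr :: "nat \<Rightarrow> nat \<Rightarrow> (nat \<Rightarrow> nat \<Rightarrow> point \<Rightarrow> real) \<Rightarrow> (nat \<Rightarrow> real \<Rightarrow> real) \<Rightarrow> point \<Rightarrow> real" where
  "repr T d h g x = (\<Sum>t=1..T-1. \<Sum>j=1..d. h t j (prefix d t x) * (x (t+1) j - x t j))
                    + (\<Sum>j=1..d. g j (x T j))"

end

theory Submission imports Defs begin

definition flipv :: "point \<Rightarrow> point \<Rightarrow> nat \<Rightarrow> nat \<Rightarrow> point \<Rightarrow> point" where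
  "flipv x0 x1 t j x = x(t := (x t)(j := (if x t j = x0 t j then x1 t j else x0 t j)))"

lemma flip_other: "s \<noteq> t \<or> i \<noteq> j \<Longrightarrow> flipv x0 x1 t j x s i = x s i"
  by (auto simp: flipv_def)

lemma flip_same: "flipv x0 x1 t j x t j = (if x t j = x0 t j then x1 t j else x0 t j)"
  by (auto simp: flipv_def)

lemma flip_grid: "x \<in> grid T d x0 x1 \<Longrightarrow> 1 \<le> t \<Longrightarrow> t \<le> T \<Longrightarrow> 1 \<le> j \<Longrightarrow> j \<le> d
   \<Longrightarrow> flipv x0 x1 t j x \<in> grid T d x0 x1"
  unfolding grid_def flipv_def by auto

lemma flip_ne: "x \<in> grid T d x0 x1 \<Longrightarrow> 1 \<le> t \<Longrightarrow> t \<le> T \<Longrightarrow> 1 \<le> j \<Longrightarrow> j \<le> d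
   \<Longrightarrow> x0 t j \<noteq> x1 t j \<Longrightarrow> flipv x0 x1 t j x t j \<noteq> x t j"
  unfolding grid_def flipv_def by auto

lemma prefix_flip: "s < t \<Longrightarrow> prefix d s (flipv x0 x1 t j x) = prefix d s x"
  unfolding prefix_def flipv_def by (auto intro!: ext)

lemma sum_delta2: "finite S \<Longrightarrow> finite I \<Longrightarrow>
  (\<Sum>s\<in>S. \<Sum>i\<in>I. if s = a \<and> i = b then v else 0) = (if a \<in> S \<and> b \<in> I then v else (0::real))"
proof -
  assume "finite S" "finite I"
  have "(\<Sum>s\<in>S. \<Sum>i\<in>I. if s = a \<and> i = b then v else 0) = (\<Sum>s\<in>S. if s = a then (\<Sum>i\<in>I. if i = b then v else 0) else 0)"
    by (rule sum.cong) auto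
  also have "\<dots> = (if a \<in> S \<and> b \<in> I then v else (0::real))"
    using \<open>finite S\<close> \<open>finite I\<close> by (simp add: sum.delta)
  finally show ?thesis .
qed

lemma div_lim: "(c::real) \<noteq> 0 \<Longrightarrow> (\<lambda>n. a n * c) \<longlonglongrightarrow> 0 \<Longrightarrow> a \<longlonglongrightarrow> 0"
proof -
  assume c: "c \<noteq> 0" and l: "(\<lambda>n. a n * c) \<longlonglongrightarrow> 0"
  have "(\<lambda>n. a n * c * (1/c)) \<longlonglongrightarrow> 0" using tendsto_mult_left_zero[OF l] .
  thus ?thesis using c by simp
qed


definition tm :: "nat \<Rightarrow> (nat \<Rightarrow> nat \<Rightarrow> point \<Rightarrow> real) \<Rightarrow> point \<Rightarrow> nat \<Rightarrow> nat \<Rightarrow> real" where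
  "tm d h x s i = h s i (prefix d s x) * (x (s+1) i - x s i)"

lemma repr_tm: "repr T d h g x = (\<Sum>s=1..T-1. \<Sum>i=1..d. tm d h x s i) + (\<Sum>i=1..d. g i (x T i))"
  by (simp add: repr_def tm_def)

lemma flipdiff_T:
  assumes T: "T \<ge> 2" and j: "1 \<le> j" "j \<le> d"
  shows "repr T d h g (flipv x0 x1 T j x) - repr T d h g x =
     h (T-1) j (prefix d (T-1) x) * (flipv x0 x1 T j x T j - x T j)
     + (g j (flipv x0 x1 T j x T j) - g j (x T j))"
proof -
  let ?x = "flipv x0 x1 T j x"
  let ?D = "flipv x0 x1 T j x T j - x T j"
  have 1: "(\<Sum>s=1..T-1. \<Sum>i=1..d. tm d h ?x s i) = (\<Sum>s=1..T-1. \<Sum>i=1..d. tm d h x s i + (if s = T-1 \<and> i = j then h (T-1) j (prefix d (T-1) x) * ?D else 0))"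
  proof (intro sum.cong refl)
    fix s i assume s: "s \<in> {1..T-1}" and i: "i \<in> {1..d}"
    have p: "prefix d s ?x = prefix d s x" using s by (intro prefix_flip) auto
    have a: "?x s i = x s i" using s by (intro flip_other) auto
    show "tm d h ?x s i = tm d h x s i + (if s = T-1 \<and> i = j then h (T-1) j (prefix d (T-1) x) * ?D else 0)"
    proof (cases "s = T-1 \<and> i = j")
      case True
      then show ?thesis using T unfolding tm_def p a by (simp add: algebra_simps)
    next
      case False
      then have "?x (s+1) i = x (s+1) i" using s T by (intro flip_other) auto
      then show ?thesis using False unfolding tm_def p a by (simp only: if_False)
    qed
  qed
  have 2: "(\<Sum>i=1..d. g i (?x T i)) = (\<Sum>i=1..d. g i (x T i) + (if i = j then g j (?x T j) - g j (x T j) else 0))"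
    by (intro sum.cong refl) (auto simp: flip_other)
  have 3: "(\<Sum>s=1..T-1. \<Sum>i=1..d. (if s = T-1 \<and> i = j then h (T-1) j (prefix d (T-1) x) * ?D else 0))
       = h (T-1) j (prefix d (T-1) x) * ?D"
    using T j by (subst sum_delta2) auto
  show ?thesis unfolding repr_tm 1 2 sum.distrib 3 using j by (simp add: sum.delta)
qed


lemma flipdiff_mid:
  assumes T: "t + 1 \<le> T - 1" and j: "1 \<le> j" "j \<le> d"
  shows "repr T d h g (flipv x0 x1 (t+1) j x) - repr T d h g x =
     (if 1 \<le> t then h t j (prefix d t x) * (flipv x0 x1 (t+1) j x (t+1) j - x (t+1) j) else 0)
     - c j * (flipv x0 x1 (t+1) j x (t+1) j - x (t+1) j)
     + (\<Sum>s=1..T-1. \<Sum>i=1..d. if t+1 \<le> s then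
          (h s i (prefix d s (flipv x0 x1 (t+1) j x)) - c i) * (flipv x0 x1 (t+1) j x (s+1) i - flipv x0 x1 (t+1) j x s i)
        - (h s i (prefix d s x) - c i) * (x (s+1) i - x s i) else 0)"
proof -
  let ?x = "flipv x0 x1 (t+1) j x"
  let ?D = "flipv x0 x1 (t+1) j x (t+1) j - x (t+1) j"
  let ?R = "\<lambda>s i. if t+1 \<le> s then
          (h s i (prefix d s ?x) - c i) * (?x (s+1) i - ?x s i)
        - (h s i (prefix d s x) - c i) * (x (s+1) i - x s i) else 0"
  have 1: "(\<Sum>s=1..T-1. \<Sum>i=1..d. tm d h ?x s i) = (\<Sum>s=1..T-1. \<Sum>i=1..d. tm d h x s i
      + (if s = t \<and> i = j then h t j (prefix d t x) * ?D else 0)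
      - (if s = t+1 \<and> i = j then c j * ?D else 0) + ?R s i)"
  proof (intro sum.cong refl)
    fix s i assume s: "s \<in> {1..T-1}" and i: "i \<in> {1..d}"
    show "tm d h ?x s i = tm d h x s i
      + (if s = t \<and> i = j then h t j (prefix d t x) * ?D else 0)
      - (if s = t+1 \<and> i = j then c j * ?D else 0) + ?R s i"
    proof (cases "s \<le> t")
      case True
      have p: "prefix d s ?x = prefix d s x" using True by (intro prefix_flip) auto
      have a: "?x s i = x s i" using True by (intro flip_other) auto
      show ?thesis
      proof (cases "s = t \<and> i = j")
        case True
        then show ?thesis unfolding tm_def p a by (simp add: algebra_simps)
      next
        case False
        then have "?x (s+1) i = x (s+1) i" using \<open>s \<le> t\<close> by (intro flip_other) auto
        then show ?thesis using False \<open>s \<le> t\<close> unfolding tm_def p a by auto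
      qed
    next
      case False
      have a: "?x (s+1) i = x (s+1) i" using False by (intro flip_other) auto
      have b: "?x s i = x s i + (if s = t+1 \<and> i = j then ?D else 0)"
        by (auto simp: flip_other)
      show ?thesis using False unfolding tm_def a b by (simp add: algebra_simps)
    qed
  qed
  have 2: "(\<Sum>i=1..d. g i (?x T i)) = (\<Sum>i=1..d. g i (x T i))"
    using T by (intro sum.cong refl) (subst flip_other, auto)
  have 3: "(\<Sum>s=1..T-1. \<Sum>i=1..d. (if s = t \<and> i = j then h t j (prefix d t x) * ?D else 0))
       = (if 1 \<le> t then h t j (prefix d t x) * ?D else 0)"
    using T j by (subst sum_delta2) auto
  have 4: "(\<Sum>s=1..T-1. \<Sum>i=1..d. (if s = t+1 \<and> i = j then c j * ?D else 0))
       = c j * ?D"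
    using T j by (subst sum_delta2) auto
  show ?thesis unfolding repr_tm 1 2 sum.distrib sum_subtractf 3 4 by simp
qed


lemma core:
  fixes T d :: nat and x0 x1 :: point and W :: "nat \<Rightarrow> point \<Rightarrow> real"
    and H :: "nat \<Rightarrow> nat \<Rightarrow> nat \<Rightarrow> point \<Rightarrow> real" and G :: "nat \<Rightarrow> nat \<Rightarrow> real \<Rightarrow> real"
  assumes d1: "d \<ge> 1" and T2: "T \<ge> 2"
   and dist: "\<And>t j. 1\<le>t \<Longrightarrow> t\<le>T \<Longrightarrow> 1\<le>j \<Longrightarrow> j\<le>d \<Longrightarrow> x0 t j \<noteq> x1 t j"
   and Wrep: "\<And>n x. x \<in> grid T d x0 x1 \<Longrightarrow> W n x = repr T d (H n) (G n) x"
   and Gn: "\<And>n j. 2\<le>j \<Longrightarrow> j\<le>d \<Longrightarrow> G n j (x0 T j) = 0"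
   and Wlim: "\<And>x. x \<in> grid T d x0 x1 \<Longrightarrow> (\<lambda>n. W n x) \<longlonglongrightarrow> 0"
  shows "\<forall>x \<in> grid T d x0 x1.
                 (\<forall>t j. 1 \<le> t \<and> t \<le> T - 1 \<and> 1 \<le> j \<and> j \<le> d
                        \<longrightarrow> (\<lambda>n. H n t j (prefix d t x)) \<longlonglongrightarrow> 0)
               \<and> (\<forall>j. 1 \<le> j \<and> j \<le> d \<longrightarrow> (\<lambda>n. G n j (x T j)) \<longlonglongrightarrow> 0)"
proof -
  let ?D = "grid T d x0 x1"
  define b where "b = (\<lambda>s i. if 1\<le>s \<and> s\<le>T \<and> 1\<le>i \<and> i\<le>d then x0 s i else (0::real))"
  have bD: "b \<in> ?D" unfolding b_def grid_def by auto
  define c where "c = (\<lambda>i n. H n (T-1) i (prefix d (T-1) b))"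
  have E: "(\<lambda>n. W n (flipv x0 x1 t j z) - W n z) \<longlonglongrightarrow> 0"
    if "z \<in> ?D" "1 \<le> t" "t \<le> T" "1 \<le> j" "j \<le> d" for z t j
    using tendsto_diff[OF Wlim[OF flip_grid[OF that]] Wlim[OF that(1)]] by simp
  have step1: "(\<lambda>n. H n (T-1) j (prefix d (T-1) x) - c j n) \<longlonglongrightarrow> 0"
    if x: "x \<in> ?D" and j: "1 \<le> j" "j \<le> d" for x j
  proof -
    define y where "y = (\<lambda>s i. if s \<le> T-1 then b s i else x s i)"
    have yD: "y \<in> ?D" using x bD unfolding y_def grid_def by auto
    have py: "prefix d (T-1) y = prefix d (T-1) b" unfolding y_def prefix_def by (auto intro!: ext)
    have yT: "y T j = x T j" using T2 unfolding y_def by auto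
    have fy: "flipv x0 x1 T j y T j = flipv x0 x1 T j x T j" unfolding flip_same yT ..
    define \<Delta> where "\<Delta> = flipv x0 x1 T j x T j - x T j"
    have Dne: "\<Delta> \<noteq> 0" unfolding \<Delta>_def using flip_ne[OF x _ _ j dist[OF _ _ j]] T2 by auto
    have eq: "(W n (flipv x0 x1 T j x) - W n x) - (W n (flipv x0 x1 T j y) - W n y)
        = (H n (T-1) j (prefix d (T-1) x) - c j n) * \<Delta>" for n
    proof -
      have g1: "flipv x0 x1 T j x \<in> ?D" using flip_grid[OF x _ _ j] T2 by auto
      have g2: "flipv x0 x1 T j y \<in> ?D" using flip_grid[OF yD _ _ j] T2 by auto
      show ?thesis
      unfolding Wrep[OF x] Wrep[OF yD] Wrep[OF g1] Wrep[OF g2] flipdiff_T[OF T2 j] py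
      by (simp add: fy yT c_def py \<Delta>_def algebra_simps)
    qed
    have "(\<lambda>n. (H n (T-1) j (prefix d (T-1) x) - c j n) * \<Delta>) \<longlonglongrightarrow> 0"
      unfolding eq[symmetric] using tendsto_diff[OF E[OF x _ _ j] E[OF yD _ _ j]] T2 by simp
    thus ?thesis by (rule div_lim[OF Dne])
  qed
  have mid: "(\<lambda>n. (if 1 \<le> t then H n t j (prefix d t x) else 0) - c j n) \<longlonglongrightarrow> 0"
    if t: "t+1 \<le> T-1"
      and Q: "\<forall>s i x. t+1 \<le> s \<and> s \<le> T-1 \<and> 1\<le>i \<and> i\<le>d \<and> x\<in>?D \<longrightarrow> (\<lambda>n. H n s i (prefix d s x) - c i n) \<longlonglongrightarrow> 0"
      and x: "x \<in> ?D" and j: "1 \<le> j" "j \<le> d" for t x j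
  proof -
    let ?x = "flipv x0 x1 (t+1) j x"
    have x'D: "?x \<in> ?D" using flip_grid[OF x _ _ j] t by auto
    define \<Delta> where "\<Delta> = ?x (t+1) j - x (t+1) j"
    have Dne: "\<Delta> \<noteq> 0" unfolding \<Delta>_def using flip_ne[OF x _ _ j dist[OF _ _ j]] t by auto
    define R where "R = (\<lambda>n. \<Sum>s=1..T-1. \<Sum>i=1..d. if t+1 \<le> s then
          (H n s i (prefix d s ?x) - c i n) * (?x (s+1) i - ?x s i)
        - (H n s i (prefix d s x) - c i n) * (x (s+1) i - x s i) else 0)"
    have R: "R \<longlonglongrightarrow> 0"
      unfolding R_def
    proof (intro tendsto_null_sum)
      fix s i assume s: "s \<in> {1..T-1}" and i: "i \<in> {1..d}"
      show "(\<lambda>n. if t+1 \<le> s then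
          (H n s i (prefix d s ?x) - c i n) * (?x (s+1) i - ?x s i)
        - (H n s i (prefix d s x) - c i n) * (x (s+1) i - x s i) else 0) \<longlonglongrightarrow> 0"
      proof (cases "t+1 \<le> s")
        case True
        have a: "(\<lambda>n. H n s i (prefix d s ?x) - c i n) \<longlonglongrightarrow> 0" using Q True s i x'D by auto
        have b: "(\<lambda>n. H n s i (prefix d s x) - c i n) \<longlonglongrightarrow> 0" using Q True s i x by auto
        show ?thesis using True tendsto_diff[OF tendsto_mult_left_zero[OF a] tendsto_mult_left_zero[OF b]] by simp
      qed simp
    qed
    have eq: "((if 1 \<le> t then H n t j (prefix d t x) else 0) - c j n) * \<Delta>
       = (W n ?x - W n x) - R n" for n
      unfolding Wrep[OF x] Wrep[OF x'D] flipdiff_mid[OF t j, where c = "\<lambda>i. c i n"] R_def \<Delta>_def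
      by (simp add: algebra_simps)
    have "(\<lambda>n. ((if 1 \<le> t then H n t j (prefix d t x) else 0) - c j n) * \<Delta>) \<longlonglongrightarrow> 0"
      unfolding eq using tendsto_diff[OF E[OF x _ _ j] R] t by simp
    thus ?thesis by (rule div_lim[OF Dne])
  qed
  have step2: "\<forall>s i x. t \<le> s \<and> s \<le> T-1 \<and> 1\<le>i \<and> i\<le>d \<and> x\<in>?D \<longrightarrow> (\<lambda>n. H n s i (prefix d s x) - c i n) \<longlonglongrightarrow> 0"
    if "1 \<le> t" "t \<le> T-1" for t
    using that(2,1)
  proof (induction t rule: inc_induct)
    case base
    then show ?case using step1 by auto
  next
    case (step t)
    show ?case
    proof (intro allI impI)
      fix s i x assume h: "t \<le> s \<and> s \<le> T-1 \<and> 1\<le>i \<and> i\<le>d \<and> x\<in>?D"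
      show "(\<lambda>n. H n s i (prefix d s x) - c i n) \<longlonglongrightarrow> 0"
      proof (cases "s = t")
        case True
        have "(\<lambda>n. (if 1 \<le> t then H n t i (prefix d t x) else 0) - c i n) \<longlonglongrightarrow> 0"
          using mid[of t x i] step h by auto
        then show ?thesis using True step by simp
      next
        case False
        then show ?thesis using step h by auto
      qed
    qed
  qed
  have Q1: "\<forall>s i x. 1 \<le> s \<and> s \<le> T-1 \<and> 1\<le>i \<and> i\<le>d \<and> x\<in>?D \<longrightarrow> (\<lambda>n. H n s i (prefix d s x) - c i n) \<longlonglongrightarrow> 0"
    using step2[of 1] T2 by auto
  have c0: "c i \<longlonglongrightarrow> 0" if "1 \<le> i" "i \<le> d" for i
  proof -
    have "(\<lambda>n. (if 1 \<le> (0::nat) then H n 0 i (prefix d 0 b) else 0) - c i n) \<longlonglongrightarrow> 0"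
      using mid[of 0 b i] Q1 T2 bD that by auto
    then have "(\<lambda>n. - c i n) \<longlonglongrightarrow> 0" by simp
    from tendsto_minus[OF this] show ?thesis by simp
  qed
  have H0: "(\<lambda>n. H n s i (prefix d s x)) \<longlonglongrightarrow> 0"
    if "1 \<le> s" "s \<le> T-1" "1 \<le> i" "i \<le> d" "x \<in> ?D" for s i x
  proof -
    have "(\<lambda>n. (H n s i (prefix d s x) - c i n) + c i n) \<longlonglongrightarrow> 0 + 0"
      using tendsto_add[OF _ c0] Q1 that by blast
    thus ?thesis by simp
  qed
  have Gsum: "(\<lambda>n. \<Sum>i=1..d. G n i (x T i)) \<longlonglongrightarrow> 0" if x: "x \<in> ?D" for x
  proof -
    have "(\<lambda>n. \<Sum>s=1..T-1. \<Sum>i=1..d. tm d (H n) x s i) \<longlonglongrightarrow> 0"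
      unfolding tm_def
      by (intro tendsto_null_sum tendsto_mult_left_zero H0) (auto simp: x)
    from tendsto_diff[OF Wlim[OF x] this] show ?thesis
      unfolding Wrep[OF x] repr_tm by simp
  qed
  have Gj: "(\<lambda>n. G n j (x T j)) \<longlonglongrightarrow> 0" if x: "x \<in> ?D" and j: "2 \<le> j" "j \<le> d" for x j
  proof -
    let ?x = "flipv x0 x1 T j x"
    have j1: "1 \<le> j" using j by simp
    have x'D: "?x \<in> ?D" using flip_grid[OF x _ _ j1 j(2)] T2 by auto
    have eq: "G n j (?x T j) - G n j (x T j) = (W n ?x - W n x) - H n (T-1) j (prefix d (T-1) x) * (?x T j - x T j)" for n
      unfolding Wrep[OF x] Wrep[OF x'D] flipdiff_T[OF T2 j1 j(2)] by simp
    have l: "(\<lambda>n. G n j (?x T j) - G n j (x T j)) \<longlonglongrightarrow> 0"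
      unfolding eq using tendsto_diff[OF E[OF x _ _ j1 j(2)] tendsto_mult_left_zero[OF H0[OF _ _ j1 j(2) x]]] T2 by simp
    have "x T j = x0 T j \<or> ?x T j = x0 T j" unfolding flip_same by auto
    then show ?thesis
    proof
      assume "x T j = x0 T j" thus ?thesis using Gn[OF j] by simp
    next
      assume a: "?x T j = x0 T j"
      from tendsto_minus[OF l] show ?thesis unfolding a using Gn[OF j] by simp
    qed
  qed
  have G1: "(\<lambda>n. G n 1 (x T 1)) \<longlonglongrightarrow> 0" if x: "x \<in> ?D" for x
  proof -
    have s: "(\<Sum>i=1..d. G n i (x T i)) = G n 1 (x T 1) + (\<Sum>i=2..d. G n i (x T i))" for n
      using d1 by (simp add: sum.atLeast_Suc_atMost numeral_2_eq_2)
    have "(\<lambda>n. \<Sum>i=2..d. G n i (x T i)) \<longlonglongrightarrow> 0"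
      by (intro tendsto_null_sum Gj[OF x]) auto
    from tendsto_diff[OF Gsum[OF x] this] show ?thesis unfolding s by simp
  qed
  show ?thesis
  proof (intro ballI conjI allI impI)
    fix x t j assume "x \<in> ?D" "1 \<le> t \<and> t \<le> T - 1 \<and> 1 \<le> j \<and> j \<le> d"
    then show "(\<lambda>n. H n t j (prefix d t x)) \<longlonglongrightarrow> 0" using H0 by auto
  next
    fix x j assume x: "x \<in> ?D" and "1 \<le> j \<and> j \<le> d"
    then show "(\<lambda>n. G n j (x T j)) \<longlonglongrightarrow> 0"
      using G1[OF x] Gj[OF x, of j] by (cases "j = 1") auto
  qed
qed


lemma repr_diff: "repr T d (\<lambda>t j p. h1 t j p - h2 t j p) (\<lambda>j y. g1 j y - g2 j y) x
   = repr T d h1 g1 x - repr T d h2 g2 x"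
  by (simp add: repr_def sum_subtractf left_diff_distrib)

theorem proposition3p2:
  fixes T d :: nat and x0 x1 :: point
    and V :: "point \<Rightarrow> real" and h :: "nat \<Rightarrow> nat \<Rightarrow> point \<Rightarrow> real" and g :: "nat \<Rightarrow> real \<Rightarrow> real"
    and Vn :: "nat \<Rightarrow> point \<Rightarrow> real" and hn :: "nat \<Rightarrow> nat \<Rightarrow> nat \<Rightarrow> point \<Rightarrow> real"
    and gn :: "nat \<Rightarrow> nat \<Rightarrow> real \<Rightarrow> real"
  assumes "d \<ge> 1" and "T \<ge> 2"
    and "\<And>t j. 1 \<le> t \<Longrightarrow> t \<le> T \<Longrightarrow> 1 \<le> j \<Longrightarrow> j \<le> d \<Longrightarrow> x0 t j \<noteq> x1 t j"
    and "\<And>x. x \<in> grid T d x0 x1 \<Longrightarrow> V x = repr T d h g x"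
    and "\<And>n x. x \<in> grid T d x0 x1 \<Longrightarrow> Vn n x = repr T d (hn n) (gn n) x"
    and "\<And>j. 2 \<le> j \<Longrightarrow> j \<le> d \<Longrightarrow> g j (x0 T j) = 0"
    and "\<And>n j. 2 \<le> j \<Longrightarrow> j \<le> d \<Longrightarrow> gn n j (x0 T j) = 0"
  shows "(\<forall>h' g'. (\<forall>x \<in> grid T d x0 x1. V x = repr T d h' g' x)
             \<and> (\<forall>j. 2 \<le> j \<and> j \<le> d \<longrightarrow> g' j (x0 T j) = 0)
           \<longrightarrow> (\<forall>x \<in> grid T d x0 x1.
                 (\<forall>t j. 1 \<le> t \<and> t \<le> T - 1 \<and> 1 \<le> j \<and> j \<le> d
                        \<longrightarrow> h' t j (prefix d t x) = h t j (prefix d t x))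
               \<and> (\<forall>j. 1 \<le> j \<and> j \<le> d \<longrightarrow> g' j (x T j) = g j (x T j))))
       \<and> ((\<forall>x \<in> grid T d x0 x1. (\<lambda>n. Vn n x) \<longlonglongrightarrow> V x)
           \<longrightarrow> (\<forall>x \<in> grid T d x0 x1.
                 (\<forall>t j. 1 \<le> t \<and> t \<le> T - 1 \<and> 1 \<le> j \<and> j \<le> d
                        \<longrightarrow> (\<lambda>n. hn n t j (prefix d t x)) \<longlonglongrightarrow> h t j (prefix d t x))
               \<and> (\<forall>j. 1 \<le> j \<and> j \<le> d \<longrightarrow> (\<lambda>n. gn n j (x T j)) \<longlonglongrightarrow> g j (x T j))))"
proof (intro conjI allI impI)
  fix h' g' assume a: "(\<forall>x \<in> grid T d x0 x1. V x = repr T d h' g' x)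
             \<and> (\<forall>j. 2 \<le> j \<and> j \<le> d \<longrightarrow> g' j (x0 T j) = 0)"
  have C: "\<forall>x \<in> grid T d x0 x1.
                 (\<forall>t j. 1 \<le> t \<and> t \<le> T - 1 \<and> 1 \<le> j \<and> j \<le> d
                        \<longrightarrow> (\<lambda>n::nat. h' t j (prefix d t x) - h t j (prefix d t x)) \<longlonglongrightarrow> 0)
               \<and> (\<forall>j. 1 \<le> j \<and> j \<le> d \<longrightarrow> (\<lambda>n::nat. g' j (x T j) - g j (x T j)) \<longlonglongrightarrow> 0)"
  proof (rule core[where W = "\<lambda>n x. 0" and H = "\<lambda>n t j p. h' t j p - h t j p" and G = "\<lambda>n j y. g' j y - g j y"])
    fix n x assume x: "x \<in> grid T d x0 x1"
    show "0 = repr T d (\<lambda>t j p. h' t j p - h t j p) (\<lambda>j y. g' j y - g j y) x"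
      unfolding repr_diff using a assms(4)[OF x] x by auto
  next
    fix n j assume "2 \<le> (j::nat)" "j \<le> d"
    then show "g' j (x0 T j) - g j (x0 T j) = 0" using a assms(6) by auto
  qed (use assms in auto)
  show "\<forall>x \<in> grid T d x0 x1.
                 (\<forall>t j. 1 \<le> t \<and> t \<le> T - 1 \<and> 1 \<le> j \<and> j \<le> d
                        \<longrightarrow> h' t j (prefix d t x) = h t j (prefix d t x))
               \<and> (\<forall>j. 1 \<le> j \<and> j \<le> d \<longrightarrow> g' j (x T j) = g j (x T j))"
    using C unfolding LIMSEQ_const_iff by auto
next
  assume a: "\<forall>x \<in> grid T d x0 x1. (\<lambda>n. Vn n x) \<longlonglongrightarrow> V x"
  have C: "\<forall>x \<in> grid T d x0 x1.
                 (\<forall>t j. 1 \<le> t \<and> t \<le> T - 1 \<and> 1 \<le> j \<and> j \<le> d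
                        \<longrightarrow> (\<lambda>n. hn n t j (prefix d t x) - h t j (prefix d t x)) \<longlonglongrightarrow> 0)
               \<and> (\<forall>j. 1 \<le> j \<and> j \<le> d \<longrightarrow> (\<lambda>n. gn n j (x T j) - g j (x T j)) \<longlonglongrightarrow> 0)"
  proof (rule core[where W = "\<lambda>n x. Vn n x - V x" and H = "\<lambda>n t j p. hn n t j p - h t j p" and G = "\<lambda>n j y. gn n j y - g j y"])
    fix n x assume x: "x \<in> grid T d x0 x1"
    show "Vn n x - V x = repr T d (\<lambda>t j p. hn n t j p - h t j p) (\<lambda>j y. gn n j y - g j y) x"
      unfolding repr_diff using assms(4,5) x by auto
  next
    fix n j assume "2 \<le> (j::nat)" "j \<le> d"
    then show "gn n j (x0 T j) - g j (x0 T j) = 0" using assms(6,7) by auto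
  next
    fix x assume x: "x \<in> grid T d x0 x1"
    show "(\<lambda>n. Vn n x - V x) \<longlonglongrightarrow> 0" using tendsto_diff[OF bspec[OF a x] tendsto_const[of "V x"]] by simp
  qed (use assms in auto)
  show "\<forall>x \<in> grid T d x0 x1.
                 (\<forall>t j. 1 \<le> t \<and> t \<le> T - 1 \<and> 1 \<le> j \<and> j \<le> d
                        \<longrightarrow> (\<lambda>n. hn n t j (prefix d t x)) \<longlonglongrightarrow> h t j (prefix d t x))
               \<and> (\<forall>j. 1 \<le> j \<and> j \<le> d \<longrightarrow> (\<lambda>n. gn n j (x T j)) \<longlonglongrightarrow> g j (x T j))"
  proof (intro ballI conjI allI impI)
    fix x t j assume x: "x \<in> grid T d x0 x1" and tj: "1 \<le> t \<and> t \<le> T - 1 \<and> 1 \<le> j \<and> j \<le> d"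
    have "(\<lambda>n. (hn n t j (prefix d t x) - h t j (prefix d t x)) + h t j (prefix d t x)) \<longlonglongrightarrow> 0 + h t j (prefix d t x)"
      using C x tj by (intro tendsto_add tendsto_const) auto
    then show "(\<lambda>n. hn n t j (prefix d t x)) \<longlonglongrightarrow> h t j (prefix d t x)" by simp
  next
    fix x j assume x: "x \<in> grid T d x0 x1" and j: "1 \<le> j \<and> j \<le> d"
    have "(\<lambda>n. (gn n j (x T j) - g j (x T j)) + g j (x T j)) \<longlonglongrightarrow> 0 + g j (x T j)"
      using C x j by (intro tendsto_add tendsto_const) auto
    then show "(\<lambda>n. gn n j (x T j)) \<longlonglongrightarrow> g j (x T j)" by simp
  qed
qed

end
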